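(* Let $A$ be a partially symmetric associative 0-dialgebra with involution. On $A\oplus A$ define $(a,b)\dashv(c,d)=(a\dashv c-d\vdash b^\ast,\; a^\ast\dashv d+c\vdash b)$, $(a,b)\vdash(c,d)=(a\vdash c-d\dashv b^\ast,\; a^\ast\vdash d+c\dashv b)$ and $(a,b)^\ast=(a^\ast,-b)$. Then $A\oplus A$ with these operations is a partially symmetric alternative 0-dialgebra with involution.
   Context: A 0-dialgebra with involution is a vector space with bilinear operations $\dashv,\vdash$ satisfying $a\dashv(b\dashv c)=a\dashv(b\vdash c)$ and $(a\dashv b)\vdash c=(a\vdash b)\vdash c$, together with a linear map $\ast$ with $(a^\ast)^\ast=a$, $(a\dashv b)^\ast=b^\ast\vdash a^\ast$, $(a\vdash b)^\ast=b^\ast\dashv a^\ast$. Write $\mathrm{sym}(x)=x+x^\ast$ and $\{x,y\}=x\dashv y-y\vdash x$; it is partially symmetric if $\{\mathrm{sym}(x),y\}=0$ and $\{x,\mathrm{sym}(y)\}=0$ for all $x,y$. Associators: $(a,b,c)_\dashv=(a\dashv b)\dashv c-a\dashv(b\dashv c)$, $(a,b,c)_\times=(a\vdash b)\dashv c-a\vdash(b\dashv c)$, $(a,b,c)_\vdash=(a\vdash b)\vdash c-a\vdash(b\vdash c)$. The 0-dialgebra is associative if all three associators vanish identically, and alternative if $(a,b,c)_\dashv+(c,b,a)_\vdash=0$, $(a,b,c)_\dashv-(b,c,a)_\vdash=0$ and $(a,b,c)_\times+(a,c,b)_\vdash=0$ for all $a,b,c$. *)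

theory Defs
  imports Complex_Main "HOL-Library.Product_Plus"
begin

text \<open>Operations: L = left product (dashv),
  R = right product (vdash), st = involution.\<close>

definition bilinear_op :: "('k::field \<Rightarrow> 'a::ab_group_add \<Rightarrow> 'a) \<Rightarrow> ('a \<Rightarrow> 'a \<Rightarrow> 'a) \<Rightarrow> bool" where
  "bilinear_op sc f \<longleftrightarrow>
     (\<forall>x. Vector_Spaces.linear sc sc (f x)) \<and> (\<forall>y. Vector_Spaces.linear sc sc (\<lambda>x. f x y))"

definition zero_dialgebra ::
  "('k::field \<Rightarrow> 'a::ab_group_add \<Rightarrow> 'a) \<Rightarrow> ('a \<Rightarrow> 'a \<Rightarrow> 'a) \<Rightarrow> ('a \<Rightarrow> 'a \<Rightarrow> 'a) \<Rightarrow> bool" where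
  "zero_dialgebra sc L R \<longleftrightarrow>
     vector_space sc \<and> bilinear_op sc L \<and> bilinear_op sc R \<and>
     (\<forall>a b c. L a (L b c) = L a (R b c)) \<and>
     (\<forall>a b c. R (L a b) c = R (R a b) c)"

definition zero_dialgebra_inv ::
  "('k::field \<Rightarrow> 'a::ab_group_add \<Rightarrow> 'a) \<Rightarrow> ('a \<Rightarrow> 'a \<Rightarrow> 'a) \<Rightarrow> ('a \<Rightarrow> 'a \<Rightarrow> 'a) \<Rightarrow> ('a \<Rightarrow> 'a) \<Rightarrow> bool" where
  "zero_dialgebra_inv sc L R st \<longleftrightarrow>
     zero_dialgebra sc L R \<and> Vector_Spaces.linear sc sc st \<and>
     (\<forall>a. st (st a) = a) \<and>
     (\<forall>a b. st (L a b) = R (st b) (st a)) \<and>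
     (\<forall>a b. st (R a b) = L (st b) (st a))"

definition dsym :: "('a::ab_group_add \<Rightarrow> 'a) \<Rightarrow> 'a \<Rightarrow> 'a" where
  "dsym st x = x + st x"

definition dbracket :: "('a::ab_group_add \<Rightarrow> 'a \<Rightarrow> 'a) \<Rightarrow> ('a \<Rightarrow> 'a \<Rightarrow> 'a) \<Rightarrow> 'a \<Rightarrow> 'a \<Rightarrow> 'a" where
  "dbracket L R x y = L x y - R y x"

definition partially_symmetric ::
  "('a::ab_group_add \<Rightarrow> 'a \<Rightarrow> 'a) \<Rightarrow> ('a \<Rightarrow> 'a \<Rightarrow> 'a) \<Rightarrow> ('a \<Rightarrow> 'a) \<Rightarrow> bool" where
  "partially_symmetric L R st \<longleftrightarrow>
     (\<forall>x y. dbracket L R (dsym st x) y = 0) \<and> (\<forall>x y. dbracket L R x (dsym st y) = 0)"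

definition assoc_l :: "('a::ab_group_add \<Rightarrow> 'a \<Rightarrow> 'a) \<Rightarrow> ('a \<Rightarrow> 'a \<Rightarrow> 'a) \<Rightarrow> 'a \<Rightarrow> 'a \<Rightarrow> 'a \<Rightarrow> 'a" where
  "assoc_l L R a b c = L (L a b) c - L a (L b c)"

definition assoc_x :: "('a::ab_group_add \<Rightarrow> 'a \<Rightarrow> 'a) \<Rightarrow> ('a \<Rightarrow> 'a \<Rightarrow> 'a) \<Rightarrow> 'a \<Rightarrow> 'a \<Rightarrow> 'a \<Rightarrow> 'a" where
  "assoc_x L R a b c = L (R a b) c - R a (L b c)"

definition assoc_r :: "('a::ab_group_add \<Rightarrow> 'a \<Rightarrow> 'a) \<Rightarrow> ('a \<Rightarrow> 'a \<Rightarrow> 'a) \<Rightarrow> 'a \<Rightarrow> 'a \<Rightarrow> 'a \<Rightarrow> 'a" where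
  "assoc_r L R a b c = R (R a b) c - R a (R b c)"

definition dialg_associative :: "('a::ab_group_add \<Rightarrow> 'a \<Rightarrow> 'a) \<Rightarrow> ('a \<Rightarrow> 'a \<Rightarrow> 'a) \<Rightarrow> bool" where
  "dialg_associative L R \<longleftrightarrow>
     (\<forall>a b c. assoc_l L R a b c = 0 \<and> assoc_x L R a b c = 0 \<and> assoc_r L R a b c = 0)"

definition dialg_alternative :: "('a::ab_group_add \<Rightarrow> 'a \<Rightarrow> 'a) \<Rightarrow> ('a \<Rightarrow> 'a \<Rightarrow> 'a) \<Rightarrow> bool" where
  "dialg_alternative L R \<longleftrightarrow>
     (\<forall>a b c. assoc_l L R a b c + assoc_r L R c b a = 0 \<and>
              assoc_l L R a b c - assoc_r L R b c a = 0 \<and>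
              assoc_x L R a b c + assoc_r L R a c b = 0)"

definition dbl_scale :: "('k \<Rightarrow> 'a \<Rightarrow> 'a) \<Rightarrow> 'k \<Rightarrow> 'a \<times> 'a \<Rightarrow> 'a \<times> 'a" where
  "dbl_scale sc k p = (sc k (fst p), sc k (snd p))"

definition dbl_L :: "('a::ab_group_add \<Rightarrow> 'a \<Rightarrow> 'a) \<Rightarrow> ('a \<Rightarrow> 'a \<Rightarrow> 'a) \<Rightarrow> ('a \<Rightarrow> 'a)
    \<Rightarrow> 'a \<times> 'a \<Rightarrow> 'a \<times> 'a \<Rightarrow> 'a \<times> 'a" where
  "dbl_L L R st p q = (case p of (a, b) \<Rightarrow> case q of (c, d) \<Rightarrow>
      (L a c - R d (st b), L (st a) d + R c b))"

definition dbl_R :: "('a::ab_group_add \<Rightarrow> 'a \<Rightarrow> 'a) \<Rightarrow> ('a \<Rightarrow> 'a \<Rightarrow> 'a) \<Rightarrow> ('a \<Rightarrow> 'a)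
    \<Rightarrow> 'a \<times> 'a \<Rightarrow> 'a \<times> 'a \<Rightarrow> 'a \<times> 'a" where
  "dbl_R L R st p q = (case p of (a, b) \<Rightarrow> case q of (c, d) \<Rightarrow>
      (R a c - L d (st b), R (st a) d + L c b))"

definition dbl_star :: "('a::ab_group_add \<Rightarrow> 'a) \<Rightarrow> 'a \<times> 'a \<Rightarrow> 'a \<times> 'a" where
  "dbl_star st p = (st (fst p), - snd p)"

end

theory Submission
  imports Defs
begin

locale PSA =
  fixes L R :: "'a::ab_group_add \<Rightarrow> 'a \<Rightarrow> 'a" and st :: "'a \<Rightarrow> 'a"
  assumes Ladd1: "L (x + y) z = L x z + L y z" and Ladd2: "L x (y + z) = L x y + L x z"
    and Radd1: "R (x + y) z = R x z + R y z" and Radd2: "R x (y + z) = R x y + R x z"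
    and st_add: "st (x + y) = st x + st y" and st_st: "st (st x) = x"
    and st_L: "st (L x y) = R (st y) (st x)" and st_R: "st (R x y) = L (st y) (st x)"
    and zd1: "L x (L y z) = L x (R y z)" and zd2: "R (L x y) z = R (R x y) z"
    and asl: "L (L x y) z = L x (L y z)" and asx: "L (R x y) z = R x (L y z)"
    and asr: "R (R x y) z = R x (R y z)"
    and ps1: "L (x + st x) y = R y (x + st x)" and ps2: "L x (y + st y) = R (y + st y) x"
begin

lemma L0l: "L 0 x = 0" using Ladd1[of 0 0 x] by simp
lemma L0r: "L x 0 = 0" using Ladd2[of x 0 0] by simp
lemma R0l: "R 0 x = 0" using Radd1[of 0 0 x] by simp
lemma R0r: "R x 0 = 0" using Radd2[of x 0 0] by simp
lemma st0: "st 0 = 0" using st_add[of 0 0] by simp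
lemma Lneg1: "L (- x) y = - L x y"
proof -
  have "L x y + L (- x) y = 0" using Ladd1[of x "- x" y] L0l by simp
  then show ?thesis by (metis add.commute eq_neg_iff_add_eq_0)
qed
lemma Lneg2: "L y (- x) = - L y x"
proof -
  have "L y x + L y (- x) = 0" using Ladd2[of y x "- x"] L0r by simp
  then show ?thesis by (metis add.commute eq_neg_iff_add_eq_0)
qed
lemma Rneg1: "R (- x) y = - R x y"
proof -
  have "R x y + R (- x) y = 0" using Radd1[of x "- x" y] R0l by simp
  then show ?thesis by (metis add.commute eq_neg_iff_add_eq_0)
qed
lemma Rneg2: "R y (- x) = - R y x"
proof -
  have "R y x + R y (- x) = 0" using Radd2[of y x "- x"] R0r by simp
  then show ?thesis by (metis add.commute eq_neg_iff_add_eq_0)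
qed
lemma stneg: "st (- x) = - st x"
proof -
  have "st x + st (- x) = 0" using st_add[of x "- x"] st0 by simp
  then show ?thesis by (metis add.commute eq_neg_iff_add_eq_0)
qed
lemma Ldiff1: "L (x - y) z = L x z - L y z" by (simp only: diff_conv_add_uminus Ladd1 Lneg1)
lemma Ldiff2: "L z (x - y) = L z x - L z y" by (simp only: diff_conv_add_uminus Ladd2 Lneg2)
lemma Rdiff1: "R (x - y) z = R x z - R y z" by (simp only: diff_conv_add_uminus Radd1 Rneg1)
lemma Rdiff2: "R z (x - y) = R z x - R z y" by (simp only: diff_conv_add_uminus Radd2 Rneg2)
lemma stdiff: "st (x - y) = st x - st y" by (simp only: diff_conv_add_uminus st_add stneg)
lemma RL: "R (L x y) z = R x (R y z)" by (simp add: zd2 asr)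
lemma LR: "L x (R y z) = L x (L y z)" by (simp add: zd1)

lemmas nrm = Ladd1 Ladd2 Radd1 Radd2 st_add st_st st_L st_R L0l L0r R0l R0r st0
  Lneg1 Lneg2 Rneg1 Rneg2 stneg Ldiff1 Ldiff2 Rdiff1 Rdiff2 stdiff asl asx asr RL LR

lemma d1: "L (x + st x) y - R y (x + st x) = 0" using ps1 by simp
lemma d2: "L x (y + st y) - R (y + st y) x = 0" using ps2 by simp

lemmas dzero = d1 d2 L0l L0r R0l R0r add_0_left add_0_right diff_0 diff_0_right minus_zero diff_self

lemmas dbl_defs = dbl_L_def dbl_R_def dbl_star_def dsym_def assoc_l_def assoc_r_def assoc_x_def

lemma dz1_fst: "fst (dbl_L L R st (a,b) (dbl_L L R st (c,d) (e,f))) - fst (dbl_L L R st (a,b) (dbl_R L R st (c,d) (e,f))) = 0"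
  by (simp add: dbl_defs nrm algebra_simps)

lemma dz1_snd: "snd (dbl_L L R st (a,b) (dbl_L L R st (c,d) (e,f))) - snd (dbl_L L R st (a,b) (dbl_R L R st (c,d) (e,f))) = 0"
  by (simp add: dbl_defs nrm algebra_simps)

lemma dz2_fst: "fst (dbl_R L R st (dbl_L L R st (a,b) (c,d)) (e,f)) - fst (dbl_R L R st (dbl_R L R st (a,b) (c,d)) (e,f)) = 0"
  by (simp add: dbl_defs nrm algebra_simps)

lemma dz2_snd: "snd (dbl_R L R st (dbl_L L R st (a,b) (c,d)) (e,f)) - snd (dbl_R L R st (dbl_R L R st (a,b) (c,d)) (e,f)) = 0"
  by (simp add: dbl_defs nrm algebra_simps)

lemma inv1_fst: "fst (dbl_star st (dbl_L L R st (a,b) (c,d))) - fst (dbl_R L R st (dbl_star st (c,d)) (dbl_star st (a,b))) = 0"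
  by (simp add: dbl_defs nrm algebra_simps)

lemma inv1_snd: "snd (dbl_star st (dbl_L L R st (a,b) (c,d))) - snd (dbl_R L R st (dbl_star st (c,d)) (dbl_star st (a,b))) = 0"
  by (simp add: dbl_defs nrm algebra_simps)

lemma inv2_fst: "fst (dbl_star st (dbl_R L R st (a,b) (c,d))) - fst (dbl_L L R st (dbl_star st (c,d)) (dbl_star st (a,b))) = 0"
  by (simp add: dbl_defs nrm algebra_simps)

lemma inv2_snd: "snd (dbl_star st (dbl_R L R st (a,b) (c,d))) - snd (dbl_L L R st (dbl_star st (c,d)) (dbl_star st (a,b))) = 0"
  by (simp add: dbl_defs nrm algebra_simps)

lemma ps1_fst: "fst (dbl_L L R st (dsym (dbl_star st) (a,b)) (c,d)) - fst (dbl_R L R st (c,d) (dsym (dbl_star st) (a,b))) = 0"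
proof -
  have "fst (dbl_L L R st (dsym (dbl_star st) (a,b)) (c,d)) - fst (dbl_R L R st (c,d) (dsym (dbl_star st) (a,b))) = (L (a + st a) c - R c (a + st a))"
    by (simp add: dbl_defs nrm algebra_simps)
  also have "\<dots> = 0" by (simp only: dzero)
  finally show ?thesis .
qed

lemma ps1_snd: "snd (dbl_L L R st (dsym (dbl_star st) (a,b)) (c,d)) - snd (dbl_R L R st (c,d) (dsym (dbl_star st) (a,b))) = 0"
  by (simp add: dbl_defs nrm algebra_simps)

lemma ps2_fst: "fst (dbl_L L R st (c,d) (dsym (dbl_star st) (a,b))) - fst (dbl_R L R st (dsym (dbl_star st) (a,b)) (c,d)) = 0"
proof -
  have "fst (dbl_L L R st (c,d) (dsym (dbl_star st) (a,b))) - fst (dbl_R L R st (dsym (dbl_star st) (a,b)) (c,d)) = (L c (a + st a) - R (a + st a) c)"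
    by (simp add: dbl_defs nrm algebra_simps)
  also have "\<dots> = 0" by (simp only: dzero)
  finally show ?thesis .
qed

lemma ps2_snd: "snd (dbl_L L R st (c,d) (dsym (dbl_star st) (a,b))) - snd (dbl_R L R st (dsym (dbl_star st) (a,b)) (c,d)) = 0"
  by (simp add: dbl_defs nrm algebra_simps)

lemma alt1_fst: "fst (assoc_l (dbl_L L R st) (dbl_R L R st) (a,b) (c,d) (e,f) + assoc_r (dbl_L L R st) (dbl_R L R st) (e,f) (c,d) (a,b)) - fst (0) = 0"
proof -
  have "fst (assoc_l (dbl_L L R st) (dbl_R L R st) (a,b) (c,d) (e,f) + assoc_r (dbl_L L R st) (dbl_R L R st) (e,f) (c,d) (a,b)) - fst (0) = (L (L (b + st b) d - R d (b + st b)) e) + (R e (L b (d + st d) - R (d + st d) b)) - (R e (L (b + st b) d - R d (b + st b))) - (L (L (b + st b) e - R e (b + st b)) d) - (L b (L (d + st d) e - R e (d + st d))) - (L (st b) (L (d + st d) e - R e (d + st d))) - (L (L (b + st b) e - R e (b + st b)) (st d)) + (L (L (b + st b) (st d) - R (st d) (b + st b)) e) - (L (L b (d + st d) - R (d + st d) b) e) + (L ((L b d) + st (L b d)) e - R e ((L b d) + st (L b d))) - (R e (L (b + st b) (st d) - R (st d) (b + st b))) + (L a ((L d (st f)) + st (L d (st f))) - R ((L d (st f)) + st (L d (st f))) a) - (L (L b (c + st c) - R (c + st c) b) (st f)) + (L b ((L c f) + st (L c f)) - R ((L c f) + st (L c f)) b) - (L (L b (c + st c) - R (c + st c) b) f)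 - (R c (L b (f + st f) - R (f + st f) b)) + (L b ((L c (st f)) + st (L c (st f))) - R ((L c (st f)) + st (L c (st f))) b) - (R f (L (b + st b) (st c) - R (st c) (b + st b))) - (R (st c) (L (b + st b) f - R f (b + st b))) + (L ((L b c) + st (L b c)) f - R f ((L b c) + st (L b c))) - (L (L b (f + st f) - R (f + st f) b) c) - (R (st f) (L b (c + st c) - R (c + st c) b)) - (L (L b (f + st f) - R (f + st f) b) (st c)) + (L b ((L (st c) f) + st (L (st c) f)) - R ((L (st c) f) + st (L (st c) f)) b) + (L b (L (c + st c) (st f) - R (st f) (c + st c))) - (L b (L c (f + st f) - R (f + st f) c))"
    by (simp add: dbl_defs nrm algebra_simps)
  also have "\<dots> = 0" by (simp only: dzero)
  finally show ?thesis .
qed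

lemma alt1_snd: "snd (assoc_l (dbl_L L R st) (dbl_R L R st) (a,b) (c,d) (e,f) + assoc_r (dbl_L L R st) (dbl_R L R st) (e,f) (c,d) (a,b)) - snd (0) = 0"
proof -
  have "snd (assoc_l (dbl_L L R st) (dbl_R L R st) (a,b) (c,d) (e,f) + assoc_r (dbl_L L R st) (dbl_R L R st) (e,f) (c,d) (a,b)) - snd (0) = (L (L a (c + st c) - R (c + st c) a) f) - (L (L (a + st a) (st c) - R (st c) (a + st a)) f) + (L (L a (e + st e) - R (e + st e) a) d) - (L (L (a + st a) e - R e (a + st a)) d) - (L (L b (e + st e) - R (e + st e) b) c) - (R e (L b (c + st c) - R (c + st c) b)) - (R (st e) (L b (c + st c) - R (c + st c) b)) - (L (L b (e + st e) - R (e + st e) b) (st c)) + (L b ((L (st c) e) + st (L (st c) e)) - R ((L (st c) e) + st (L (st c) e)) b) + (L b ((L c e) + st (L c e)) - R ((L c e) + st (L c e)) b) + (L b ((L c e) + st (L c e)) - R ((L c e) + st (L c e)) b) + (L b (L (c + st c) (st e) - R (st e) (c + st c))) - (L (L b (c + st c) - R (c + st c) b) (st e)) - (L b (L c (e + st e) - R (e + st e) c)) + (L b ((L c (st e)) + st (L c (st e))) - R ((L c (st e)) + st (L c (st e))) b) - (L (L b (c + st c) - R (c + st c) b) e) - (R (st c) (L b (e + st e) - R (e + st e) b)) - (R c (L b (e + st e) - R (e + st e) b))"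
    by (simp add: dbl_defs nrm algebra_simps)
  also have "\<dots> = 0" by (simp only: dzero)
  finally show ?thesis .
qed

lemma alt2_fst: "fst (assoc_l (dbl_L L R st) (dbl_R L R st) (a,b) (c,d) (e,f) - assoc_r (dbl_L L R st) (dbl_R L R st) (c,d) (e,f) (a,b)) - fst (0) = 0"
proof -
  have "fst (assoc_l (dbl_L L R st) (dbl_R L R st) (a,b) (c,d) (e,f) - assoc_r (dbl_L L R st) (dbl_R L R st) (c,d) (e,f) (a,b)) - fst (0) = (L (L (b + st b) d - R d (b + st b)) e) - (L (L (b + st b) e - R e (b + st b)) d) + (R e (L b (d + st d) - R (d + st d) b)) - (R e (L (b + st b) d - R d (b + st b))) + (L (L b (e + st e) - R (e + st e) b) (st d)) - (R e (L (b + st b) (st d) - R (st d) (b + st b))) + (L ((L b d) + st (L b d)) e - R e ((L b d) + st (L b d))) + (L (L (b + st b) (st d) - R (st d) (b + st b)) e) - (L (L b (d + st d) - R (d + st d) b) e) - (L (st b) (L (d + st d) e - R e (d + st d))) - (L (L (b + st b) e - R e (b + st b)) (st d)) + (L b (L (d + st d) (st e) - R (st e) (d + st d))) - (L b (L d (e + st e) - R (e + st e) d)) - (R (st c) (L (b + st b) f - R f (b + st b))) - (R f (L (b + st b) (st c) - R (st c) (b + st b))) + (L b ((L c (st f)) + st (L c (st f))) - R ((L c (st f)) + st (L c (st f))) b) + (L b ((L c f) + st (L c f)) - R ((L c f) + st (L c f)) b) - (L (L b (c + st c) - R (c + st c) b) f) - (R c (L b (f + st f) - R (f + st f) b)) +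 (L ((L b c) + st (L b c)) f - R f ((L b c) + st (L b c))) - (L (L b (f + st f) - R (f + st f) b) c) - (R (st f) (L b (c + st c) - R (c + st c) b)) - (L (L b (f + st f) - R (f + st f) b) (st c)) + (L b ((L (st c) f) + st (L (st c) f)) - R ((L (st c) f) + st (L (st c) f)) b) - (L b (L c (f + st f) - R (f + st f) c))"
    by (simp add: dbl_defs nrm algebra_simps)
  also have "\<dots> = 0" by (simp only: dzero)
  finally show ?thesis .
qed

lemma alt2_snd: "snd (assoc_l (dbl_L L R st) (dbl_R L R st) (a,b) (c,d) (e,f) - assoc_r (dbl_L L R st) (dbl_R L R st) (c,d) (e,f) (a,b)) - snd (0) = 0"
proof -
  have "snd (assoc_l (dbl_L L R st) (dbl_R L R st) (a,b) (c,d) (e,f) - assoc_r (dbl_L L R st) (dbl_R L R st) (c,d) (e,f) (a,b)) - snd (0) = - (L (L (a + st a) (st c) - R (st c) (a + st a)) f) + (L b (L d (f + st f) - R (f + st f) d)) - (L b (L (d + st d) f - R f (d + st d))) - (L b ((L d (st f)) + st (L d (st f))) - R ((L d (st f)) + st (L d (st f))) b) - (L (L (a + st a) e - R e (a + st a)) d) - (L (L b (e + st e) - R (e + st e) b) c) - (R e (L b (c + st c) - R (c + st c) b)) - (R (st e) (L b (c + st c) - R (c + st c) b)) - (L (L b (e + st e) - R (e + st e) b) (st c)) + (L b ((L (st c) e) + st (L (st c) e)) - R ((L (st c) e) + st (L (st c) e)) b) + (L b ((L c e) + st (L c e)) - R ((L c e) + st (L c e)) b) + (L b ((L c e) + st (L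 c e)) - R ((L c e) + st (L c e)) b) + (L b (L (c + st c) (st e) - R (st e) (c + st c))) - (L (L b (c + st c) - R (c + st c) b) (st e)) - (L b (L c (e + st e) - R (e + st e) c)) + (L b ((L c (st e)) + st (L c (st e))) - R ((L c (st e)) + st (L c (st e))) b) - (L (L b (c + st c) - R (c + st c) b) e) - (R (st c) (L b (e + st e) - R (e + st e) b)) - (R c (L b (e + st e) - R (e + st e) b))"
    by (simp add: dbl_defs nrm algebra_simps)
  also have "\<dots> = 0" by (simp only: dzero)
  finally show ?thesis .
qed

lemma alt3_fst: "fst (assoc_x (dbl_L L R st) (dbl_R L R st) (a,b) (c,d) (e,f) + assoc_r (dbl_L L R st) (dbl_R L R st) (a,b) (e,f) (c,d)) - fst (0) = 0"
proof -
  have "fst (assoc_x (dbl_L L R st) (dbl_R L R st) (a,b) (c,d) (e,f) + assoc_r (dbl_L L R st) (dbl_R L R st) (a,b) (e,f) (c,d)) - fst (0) = - (L d (L (b + st b) (st e) - R (st e) (b + st b))) + (L d (L b (e + st e) - R (e + st e) b)) - (L d (L (b + st b) e - R e (b + st b))) - (L (L d (e + st e) - R (e + st e) d) (st b)) + (L d ((L a f) + st (L a f)) - R ((L a f) + st (L a f)) d) - (R a (L (d + st d) f - R f (d + st d))) - (L (L (d + st d) a - R a (d + st d)) f) - (L (L d (f + st f) - R (f + st f) d) a) + (L (L (d + st d) f - R f (d + st d)) a) - (L ((R a d) + st (R a d)) f - R f ((R a d) + st (R a d))) - (L (L d (f + st f) - R (f + st f) d) (st a)) + (L (L (d + st d)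 f - R f (d + st d)) (st a)) + (R a (L d (f + st f) - R (f + st f) d)) + (R (L a (f + st f) - R (f + st f) a) d) + (L (st d) (L (a + st a) f - R f (a + st a))) - (R (st f) (L d (a + st a) - R (a + st a) d)) + (L (L (c + st c) f - R f (c + st c)) (st b)) + (R f (L (c + st c) (st b) - R (st b) (c + st c)))"
    by (simp add: dbl_defs nrm algebra_simps)
  also have "\<dots> = 0" by (simp only: dzero)
  finally show ?thesis .
qed

lemma alt3_snd: "snd (assoc_x (dbl_L L R st) (dbl_R L R st) (a,b) (c,d) (e,f) + assoc_r (dbl_L L R st) (dbl_R L R st) (a,b) (e,f) (c,d)) - snd (0) = 0"
proof -
  have "snd (assoc_x (dbl_L L R st) (dbl_R L R st) (a,b) (c,d) (e,f) + assoc_r (dbl_L L R st) (dbl_R L R st) (a,b) (e,f) (c,d)) - snd (0) = (L (L (c + st c) (st a) - R (st a) (c + st c)) f) + (L ((R b d) + st (R b d)) f - R f ((R b d) + st (R b d))) - (R (L b (f + st f) - R (f + st f) b) d) - (L (st d) (L (b + st b) f - R f (b + st b))) + (R (st f) (L d (b + st b) - R (b + st b) d)) - (L d ((L b f) + st (L b f)) - R ((L b f) + st (L b f)) d) + (L (L d (f + st f) - R (f + st f) d) b) + (L (L (d + st d) b - R b (d + st d)) f) - (L (L (d + st d) f - R f (d + st d)) b) + (L (L d (f + st f) - R (f + st f) d) (st b)) - (L (L (d + st d) f - R f (d + st d)) (st b)) - (R (L (a + st a) (st e) - R (st e) (a + st a)) d) + (R (L a (e + st e) - R (e + st e) a) d)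 - (R (L (a + st a) e - R e (a + st a)) d)"
    by (simp add: dbl_defs nrm algebra_simps)
  also have "\<dots> = 0" by (simp only: dzero)
  finally show ?thesis .
qed

lemma pair_eqI':
  fixes x y :: "'a \<times> 'a"
  assumes "fst x - fst y = 0" "snd x - snd y = 0" shows "x = y"
proof (rule prod_eqI)
  show "fst x = fst y" using assms(1) by simp
  show "snd x = snd y" using assms(2) by simp
qed
lemma pair_eq0:
  fixes x y :: "'a \<times> 'a"
  assumes "fst x - fst y = 0" "snd x - snd y = 0" shows "x - y = 0"
  using pair_eqI'[OF assms] by simp

lemma DZ1: "dbl_L L R st p (dbl_L L R st q r) = dbl_L L R st p (dbl_R L R st q r)"
proof -
  obtain a b where p: "p = (a, b)" by (cases p)
  obtain c d where q: "q = (c, d)" by (cases q)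
  obtain e f where r: "r = (e, f)" by (cases r)
  show ?thesis unfolding p q r by (rule pair_eqI'[OF dz1_fst dz1_snd])
qed
lemma DZ2: "dbl_R L R st (dbl_L L R st p q) r = dbl_R L R st (dbl_R L R st p q) r"
proof -
  obtain a b where p: "p = (a, b)" by (cases p)
  obtain c d where q: "q = (c, d)" by (cases q)
  obtain e f where r: "r = (e, f)" by (cases r)
  show ?thesis unfolding p q r by (rule pair_eqI'[OF dz2_fst dz2_snd])
qed
lemma DI1: "dbl_star st (dbl_L L R st p q) = dbl_R L R st (dbl_star st q) (dbl_star st p)"
proof -
  obtain a b where p: "p = (a, b)" by (cases p)
  obtain c d where q: "q = (c, d)" by (cases q)
  show ?thesis unfolding p q by (rule pair_eqI'[OF inv1_fst inv1_snd])
qed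
lemma DI2: "dbl_star st (dbl_R L R st p q) = dbl_L L R st (dbl_star st q) (dbl_star st p)"
proof -
  obtain a b where p: "p = (a, b)" by (cases p)
  obtain c d where q: "q = (c, d)" by (cases q)
  show ?thesis unfolding p q by (rule pair_eqI'[OF inv2_fst inv2_snd])
qed
lemma DP1: "dbracket (dbl_L L R st) (dbl_R L R st) (dsym (dbl_star st) p) q = 0"
proof -
  obtain a b where p: "p = (a, b)" by (cases p)
  obtain c d where q: "q = (c, d)" by (cases q)
  show ?thesis unfolding dbracket_def p q by (rule pair_eq0[OF ps1_fst ps1_snd])
qed
lemma DP2: "dbracket (dbl_L L R st) (dbl_R L R st) q (dsym (dbl_star st) p) = 0"
proof -
  obtain a b where p: "p = (a, b)" by (cases p)
  obtain c d where q: "q = (c, d)" by (cases q)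
  show ?thesis unfolding dbracket_def p q by (rule pair_eq0[OF ps2_fst ps2_snd])
qed
lemma DSS: "dbl_star st (dbl_star st p) = p"
  by (cases p) (simp add: dbl_star_def st_st)
lemma DA: "dialg_alternative (dbl_L L R st) (dbl_R L R st)"
  unfolding dialg_alternative_def
proof (intro allI conjI)
  fix p q r :: "'a \<times> 'a"
  obtain a b where p: "p = (a, b)" by (cases p)
  obtain c d where q: "q = (c, d)" by (cases q)
  obtain e f where r: "r = (e, f)" by (cases r)
  show "assoc_l (dbl_L L R st) (dbl_R L R st) p q r + assoc_r (dbl_L L R st) (dbl_R L R st) r q p = 0"
    unfolding p q r by (rule pair_eqI'[OF alt1_fst alt1_snd])
  show "assoc_l (dbl_L L R st) (dbl_R L R st) p q r - assoc_r (dbl_L L R st) (dbl_R L R st) q r p = 0"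
    unfolding p q r by (rule pair_eqI'[OF alt2_fst alt2_snd])
  show "assoc_x (dbl_L L R st) (dbl_R L R st) p q r + assoc_r (dbl_L L R st) (dbl_R L R st) p r q = 0"
    unfolding p q r by (rule pair_eqI'[OF alt3_fst alt3_snd])
qed

end

theorem theorem5p9:
  fixes sc :: "'k::field \<Rightarrow> 'a::ab_group_add \<Rightarrow> 'a"
    and L R :: "'a \<Rightarrow> 'a \<Rightarrow> 'a"
    and st :: "'a \<Rightarrow> 'a"
  assumes "zero_dialgebra_inv sc L R st"
    and "partially_symmetric L R st"
    and "dialg_associative L R"
  shows "zero_dialgebra_inv (dbl_scale sc) (dbl_L L R st) (dbl_R L R st) (dbl_star st)
       \<and> partially_symmetric (dbl_L L R st) (dbl_R L R st) (dbl_star st)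
       \<and> dialg_alternative (dbl_L L R st) (dbl_R L R st)"
proof -
  from assms(1) have vs: "vector_space sc" and bL: "bilinear_op sc L" and bR: "bilinear_op sc R"
    and z1: "\<And>a b c. L a (L b c) = L a (R b c)" and z2: "\<And>a b c. R (L a b) c = R (R a b) c"
    and lst: "Vector_Spaces.linear sc sc st" and stst: "\<And>a. st (st a) = a"
    and stL: "\<And>a b. st (L a b) = R (st b) (st a)" and stR: "\<And>a b. st (R a b) = L (st b) (st a)"
    unfolding zero_dialgebra_inv_def zero_dialgebra_def by auto
  have La1: "L (x + y) z = L x z + L y z" and La2: "L x (y + z) = L x y + L x z"
    and Ls1: "L (sc k x) y = sc k (L x y)" and Ls2: "L x (sc k y) = sc k (L x y)" for x y z k
    using bL unfolding bilinear_op_def by (auto simp: Vector_Spaces.linear_iff)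
  have Ra1: "R (x + y) z = R x z + R y z" and Ra2: "R x (y + z) = R x y + R x z"
    and Rs1: "R (sc k x) y = sc k (R x y)" and Rs2: "R x (sc k y) = sc k (R x y)" for x y z k
    using bR unfolding bilinear_op_def by (auto simp: Vector_Spaces.linear_iff)
  have sta: "st (x + y) = st x + st y" and sts: "st (sc k x) = sc k (st x)" for x y k
    using lst unfolding Vector_Spaces.linear_iff by auto
  from assms(3) have a1: "L (L x y) z = L x (L y z)" and a2: "L (R x y) z = R x (L y z)"
    and a3: "R (R x y) z = R x (R y z)" for x y z
    unfolding dialg_associative_def assoc_l_def assoc_x_def assoc_r_def by auto
  from assms(2) have p1: "L (x + st x) y = R y (x + st x)" and p2: "L x (y + st y) = R (y + st y) x" for x y
    unfolding partially_symmetric_def dbracket_def dsym_def by auto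
  interpret PSA L R st
    by unfold_locales (fact La1 La2 Ra1 Ra2 sta stst stL stR z1 z2 a1 a2 a3 p1 p2)+
  interpret vector_space sc by (fact vs)
  have vs2: "vector_space (dbl_scale sc)"
    unfolding vector_space_def dbl_scale_def
    by (auto simp: scale_right_distrib scale_left_distrib)
  have sc_diff: "sc k (x - y) = sc k x - sc k y" for k x y by (rule scale_right_diff_distrib)
  have sc_neg: "sc k (- x) = - sc k x" for k x by (rule scale_minus_right)
  have lin1: "Vector_Spaces.linear (dbl_scale sc) (dbl_scale sc) (dbl_L L R st p)" for p
    unfolding Vector_Spaces.linear_iff using vs2
    by (cases p) (auto simp: dbl_L_def dbl_scale_def nrm Ls1 Ls2 Rs1 Rs2 sts sc_diff sc_neg scale_right_distrib algebra_simps)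
  have lin2: "Vector_Spaces.linear (dbl_scale sc) (dbl_scale sc) (\<lambda>p. dbl_L L R st p q)" for q
    unfolding Vector_Spaces.linear_iff using vs2
    by (cases q) (auto simp: dbl_L_def dbl_scale_def nrm Ls1 Ls2 Rs1 Rs2 sts sc_diff sc_neg scale_right_distrib algebra_simps)
  have lin3: "Vector_Spaces.linear (dbl_scale sc) (dbl_scale sc) (dbl_R L R st p)" for p
    unfolding Vector_Spaces.linear_iff using vs2
    by (cases p) (auto simp: dbl_R_def dbl_scale_def nrm Ls1 Ls2 Rs1 Rs2 sts sc_diff sc_neg scale_right_distrib algebra_simps)
  have lin4: "Vector_Spaces.linear (dbl_scale sc) (dbl_scale sc) (\<lambda>p. dbl_R L R st p q)" for q
    unfolding Vector_Spaces.linear_iff using vs2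
    by (cases q) (auto simp: dbl_R_def dbl_scale_def nrm Ls1 Ls2 Rs1 Rs2 sts sc_diff sc_neg scale_right_distrib algebra_simps)
  have lin5: "Vector_Spaces.linear (dbl_scale sc) (dbl_scale sc) (dbl_star st)"
    unfolding Vector_Spaces.linear_iff using vs2
    by (auto simp: dbl_star_def dbl_scale_def nrm sts sc_neg)
  have "zero_dialgebra_inv (dbl_scale sc) (dbl_L L R st) (dbl_R L R st) (dbl_star st)"
    unfolding zero_dialgebra_inv_def zero_dialgebra_def bilinear_op_def
    by (intro conjI allI vs2 lin1 lin2 lin3 lin4 lin5 DZ1 DZ2 DI1 DI2 DSS)
  moreover have "partially_symmetric (dbl_L L R st) (dbl_R L R st) (dbl_star st)"
    unfolding partially_symmetric_def by (intro conjI allI DP1 DP2)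
  ultimately show ?thesis using DA by blast
qed

end
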